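(* Let $X$ be a one-sided subshift with $\sigma(X)=X$ such that $Sp_l(X,\sigma)$ is finite. Then \[Sp_l(\widetilde{X},\sigma_{\widetilde{X}})=\imath(Sp_l(X,\sigma)),\] and consequently $|Sp_l(\widetilde{X},\sigma_{\widetilde{X}})|=|Sp_l(X,\sigma)|$.
   Context: $X\subseteq\mathcal{A}^{\mathbb{N}}$ is a closed shift-invariant set over a finite alphabet $\mathcal{A}$, $\sigma$ the left shift. For a continuous map $T$ on a space $Y$, $Sp_l(Y,T)=\{y: |T^{-1}(\{y\})|\ge 2\}$. The cover: for $x\in X$ and $l\ge0$ let $P_l(x)=\{\mu\in\mathcal{L}(X): |\mu|=l,\ \mu x\in X\}$. Let $\mathcal{I}=\{(k,l)\in\mathbb{N}^2: k\le l\}$, ordered by $(k,l)\preceq(k',l')$ iff $k\le k'$ and $l-k\le l'-k'$. For $(k,l)\in\mathcal{I}$ write $x\overset{k,l}{\sim}y$ iff $x_{[0,k)}=y_{[0,k)}$ and $P_l(\sigma^k(x))=P_l(\sigma^k(y))$; let ${}_kX_l=X/\overset{k,l}{\sim}$ (a finite discrete set) with classes ${}_k[x]_l$. For $(k,l)\preceq(k',l')$ the map ${}_{k'}[x]_{l'}\mapsto{}_k[x]_l$ is well defined, and $\widetilde{X}$ is the projective limit of the system $({}_kX_l)_{(k,l)\in\mathcal{I}}$ with these maps: a point is $\tilde{x}=(\tilde{x}_{(k,l)})_{(k,l)\in\mathcal{I}}$ with $\tilde{x}_{(k,l)}\in{}_kX_l$ compatible with the bonding maps, with the projective limit topology. The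 shift $\sigma_{\widetilde{X}}$ is given by $\sigma_{\widetilde{X}}(\tilde{x})_{(k,l)}={}_k[\sigma(z)]_l$ where $z\in X$ is any representative of $\tilde{x}_{(k+1,l+1)}$. The map $\imath:X\to\widetilde{X}$ is $\imath(x)=({}_k[x]_l)_{(k,l)\in\mathcal{I}}$ (injective). $\sigma_{\widetilde{X}}$ is a surjective local homeomorphism of the compact zero-dimensional metrizable space $\widetilde{X}$. *)

theory Defs
  imports "HOL-Analysis.Analysis"
begin

definition shift :: "(nat \<Rightarrow> 'a) \<Rightarrow> (nat \<Rightarrow> 'a)" where
  "shift x = (\<lambda>n. x (Suc n))"

definition fullshift_top :: "(nat \<Rightarrow> 'a) topology" where
  "fullshift_top = product_topology (\<lambda>_. discrete_topology (UNIV :: 'a set)) UNIV"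

definition is_subshift :: "(nat \<Rightarrow> 'a) set \<Rightarrow> bool" where
  "is_subshift X \<longleftrightarrow> closedin fullshift_top X \<and> shift ` X \<subseteq> X"

definition language :: "(nat \<Rightarrow> 'a) set \<Rightarrow> 'a list set" where
  "language X = {w. \<exists>x\<in>X. \<exists>i. w = map x [i..<i + length w]}"

definition conc :: "'a list \<Rightarrow> (nat \<Rightarrow> 'a) \<Rightarrow> (nat \<Rightarrow> 'a)" where
  "conc \<mu> x = (\<lambda>n. if n < length \<mu> then \<mu> ! n else x (n - length \<mu>))"

definition Pset :: "(nat \<Rightarrow> 'a) set \<Rightarrow> nat \<Rightarrow> (nat \<Rightarrow> 'a) \<Rightarrow> 'a list set" where
  "Pset X l x = {\<mu> \<in> language X. length \<mu> = l \<and> conc \<mu> x \<in> X}"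

definition kl_rel :: "(nat \<Rightarrow> 'a) set \<Rightarrow> nat \<Rightarrow> nat \<Rightarrow> (nat \<Rightarrow> 'a) \<Rightarrow> (nat \<Rightarrow> 'a) \<Rightarrow> bool" where
  "kl_rel X k l x y \<longleftrightarrow> (\<forall>i<k. x i = y i) \<and> Pset X l ((shift ^^ k) x) = Pset X l ((shift ^^ k) y)"

definition kl_class :: "(nat \<Rightarrow> 'a) set \<Rightarrow> nat \<Rightarrow> nat \<Rightarrow> (nat \<Rightarrow> 'a) \<Rightarrow> (nat \<Rightarrow> 'a) set" where
  "kl_class X k l x = {y \<in> X. kl_rel X k l x y}"

definition kl_quot :: "(nat \<Rightarrow> 'a) set \<Rightarrow> nat \<Rightarrow> nat \<Rightarrow> (nat \<Rightarrow> 'a) set set" where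
  "kl_quot X k l = kl_class X k l ` X"

definition idx :: "(nat \<times> nat) set" where
  "idx = {(k, l). k \<le> l}"

definition idx_le :: "nat \<times> nat \<Rightarrow> nat \<times> nat \<Rightarrow> bool" where
  "idx_le p q \<longleftrightarrow> fst p \<le> fst q \<and> snd p - fst p \<le> snd q - fst q"

text \<open>Points of the projective limit: compatible families of classes, indexed by idx
  (extended by the empty set outside idx for uniqueness of representation).
  Compatibility: the bonding map sends {}_{k'}[z]_{l'} to {}_k[z]_l.\<close>
definition Xtilde :: "(nat \<Rightarrow> 'a) set \<Rightarrow> (nat \<times> nat \<Rightarrow> (nat \<Rightarrow> 'a) set) set" where
  "Xtilde X = {f. (\<forall>p. p \<notin> idx \<longrightarrow> f p = {})
     \<and> (\<forall>(k, l)\<in>idx. f (k, l) \<in> kl_quot X k l)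
     \<and> (\<forall>(k, l)\<in>idx. \<forall>(k', l')\<in>idx. idx_le (k, l) (k', l') \<longrightarrow>
          (\<forall>z\<in>f (k', l'). f (k, l) = kl_class X k l z))}"

definition shift_tilde :: "(nat \<Rightarrow> 'a) set \<Rightarrow> (nat \<times> nat \<Rightarrow> (nat \<Rightarrow> 'a) set)
    \<Rightarrow> (nat \<times> nat \<Rightarrow> (nat \<Rightarrow> 'a) set)" where
  "shift_tilde X f = (\<lambda>(k, l). if k \<le> l
      then kl_class X k l (shift (SOME z. z \<in> f (Suc k, Suc l))) else {})"

definition iota :: "(nat \<Rightarrow> 'a) set \<Rightarrow> (nat \<Rightarrow> 'a) \<Rightarrow> (nat \<times> nat \<Rightarrow> (nat \<Rightarrow> 'a) set)" where
  "iota X x = (\<lambda>(k, l). if k \<le> l then kl_class X k l x else {})"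

definition Sp_l :: "'b set \<Rightarrow> ('b \<Rightarrow> 'b) \<Rightarrow> 'b set" where
  "Sp_l Y T = {y \<in> Y. \<exists>a\<in>Y. \<exists>b\<in>Y. a \<noteq> b \<and> T a = y \<and> T b = y}"

end

theory Submission imports Defs begin

lemma funpow_shift: "(shift ^^ n) x = (\<lambda>i. x (i + n))"
  by (induction n arbitrary: x) (auto simp: shift_def)

lemma kl_rel_alt: "kl_rel X k l x y \<longleftrightarrow> (\<forall>i<k. x i = y i) \<and>
   Pset X l (\<lambda>i. x (i + k)) = Pset X l (\<lambda>i. y (i + k))"
  by (simp add: kl_rel_def funpow_shift)

lemma shift_inv_iter:
  assumes "shift ` X \<subseteq> X" "v \<in> X" shows "(\<lambda>i. v (i + n)) \<in> X"
proof (induction n)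
  case 0 then show ?case using assms by simp
next
  case (Suc n)
  have "shift (\<lambda>i. v (i + n)) \<in> X" using Suc assms by blast
  then show ?case by (simp add: shift_def)
qed

lemma shift_surj_iter:
  assumes "shift ` X = X" "v \<in> X" shows "\<exists>u\<in>X. (\<lambda>i. u (i + n)) = v"
proof (induction n)
  case 0 then show ?case using assms by simp
next
  case (Suc n)
  then obtain u' where u': "u' \<in> X" "(\<lambda>i. u' (i + n)) = v" by blast
  then obtain u where "u \<in> X" "shift u = u'" using assms(1) by (metis imageE)
  then show ?case using u' by (auto simp: shift_def)
qed

lemma conc_append: "conc (u @ v) q = conc u (conc v q)"
  by (auto simp: conc_def nth_append fun_eq_iff)

lemma conc_shift: "(\<lambda>i. conc u q (i + length u)) = q"
  by (simp add: conc_def)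

lemma conc_map: "k \<le> k' \<Longrightarrow> conc (map x [k..<k']) (\<lambda>i. x (i + k')) = (\<lambda>i. x (i + k))"
  by (auto simp: conc_def fun_eq_iff add.commute)

lemma conc_map0: "conc (map x [0..<n]) (\<lambda>i. x (i + n)) = x"
  using conc_map[of 0 n x] by simp

lemma map_conc: "map (conc W q) [0..<length W] = W"
  by (rule nth_equalityI) (auto simp: conc_def)

lemma lang_map: "u \<in> X \<Longrightarrow> map u [0..<n] \<in> language X"
  unfolding language_def by (rule CollectI, rule bexI[of _ u]) (auto intro: exI[of _ 0])

lemma G0:
  assumes surj: "shift ` X = X"
    and P: "Pset X l' (\<lambda>i. x (i+k')) = Pset X l' (\<lambda>i. z (i+k'))"
    and agree: "\<forall>i. k \<le> i \<and> i < k' \<longrightarrow> x i = z i"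
    and kk: "k \<le> k'" and ll: "l + (k' - k) \<le> l'"
    and mu: "\<mu> \<in> Pset X l (\<lambda>i. x (i+k))"
  shows "\<mu> \<in> Pset X l (\<lambda>i. z (i+k))"
proof -
  define w where "w = map x [k..<k']"
  have wz: "w = map z [k..<k']" unfolding w_def
    by (rule map_cong) (use agree in auto)
  have p: "conc \<mu> (\<lambda>i. x(i+k)) = conc (\<mu>@w) (\<lambda>i. x(i+k'))"
    unfolding conc_append w_def conc_map[OF kk] ..
  have mul: "\<mu> \<in> language X" "length \<mu> = l" "conc \<mu> (\<lambda>i. x(i+k)) \<in> X"
    using mu unfolding Pset_def by blast+
  have pX: "conc (\<mu>@w) (\<lambda>i. x(i+k')) \<in> X" using mul(3) unfolding p .
  define m where "m = l' - l - (k'-k)"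
  obtain u where u: "u \<in> X" "(\<lambda>i. u(i+m)) = conc (\<mu>@w) (\<lambda>i. x(i+k'))"
    using shift_surj_iter[OF surj pX] by blast
  define \<nu> where "\<nu> = map u [0..<m]"
  have "u = conc \<nu> (\<lambda>i. u(i+m))" unfolding \<nu>_def conc_map0 ..
  hence u2: "u = conc (\<nu>@\<mu>@w) (\<lambda>i. x(i+k'))" unfolding u(2) conc_append .
  have len: "length (\<nu>@\<mu>@w) = l'" using mul(2) ll kk by (simp add: \<nu>_def w_def m_def)
  have "map u [0..<length (\<nu>@\<mu>@w)] = \<nu>@\<mu>@w" using map_conc[of "\<nu>@\<mu>@w"] u2 by simp
  hence "\<nu>@\<mu>@w = map u [0..<l']" using len by simp
  hence "\<nu>@\<mu>@w \<in> language X" using lang_map[OF u(1)] by simp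
  hence "\<nu>@\<mu>@w \<in> Pset X l' (\<lambda>i. x(i+k'))" using u2 u(1) len unfolding Pset_def by simp
  hence "\<nu>@\<mu>@w \<in> Pset X l' (\<lambda>i. z(i+k'))" using P by simp
  hence cz: "conc (\<nu>@(\<mu>@w)) (\<lambda>i. z(i+k')) \<in> X" unfolding Pset_def by blast
  have e: "(\<lambda>i. conc (\<nu>@(\<mu>@w)) (\<lambda>i. z(i+k')) (i + length \<nu>)) = conc (\<mu>@w) (\<lambda>i. z(i+k'))"
    unfolding conc_append conc_shift ..
  have "(\<lambda>i. conc (\<nu>@(\<mu>@w)) (\<lambda>i. z(i+k')) (i + length \<nu>)) \<in> X"
    by (rule shift_inv_iter[OF _ cz]) (use surj in simp)
  hence "conc (\<mu>@w) (\<lambda>i. z(i+k')) \<in> X" unfolding e .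
  hence "conc \<mu> (\<lambda>i. z(i+k)) \<in> X" unfolding wz conc_append conc_map[OF kk] .
  then show ?thesis using mul(1,2) unfolding Pset_def by blast
qed

lemma G:
  assumes surj: "shift ` X = X"
    and P: "Pset X l' (\<lambda>i. x (i+k')) = Pset X l' (\<lambda>i. z (i+k'))"
    and agree: "\<forall>i. k \<le> i \<and> i < k' \<longrightarrow> x i = z i"
    and kk: "k \<le> k'" and ll: "l + (k' - k) \<le> l'"
  shows "Pset X l (\<lambda>i. x (i+k)) = Pset X l (\<lambda>i. z (i+k))"
proof -
  have agree': "\<forall>i. k \<le> i \<and> i < k' \<longrightarrow> z i = x i" using agree by simp
  show ?thesis
  proof (rule subset_antisym; rule subsetI)
    fix \<mu> assume "\<mu> \<in> Pset X l (\<lambda>i. x (i+k))"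
    then show "\<mu> \<in> Pset X l (\<lambda>i. z (i+k))" by (rule G0[OF surj P agree kk ll])
  next
    fix \<mu> assume "\<mu> \<in> Pset X l (\<lambda>i. z (i+k))"
    then show "\<mu> \<in> Pset X l (\<lambda>i. x (i+k))" by (rule G0[OF surj P[symmetric] agree' kk ll])
  qed
qed

lemma cls_self: "z \<in> X \<Longrightarrow> z \<in> kl_class X k l z"
  by (simp add: kl_class_def kl_rel_def)

lemma cls_eq: "kl_rel X k l z w \<Longrightarrow> kl_class X k l z = kl_class X k l w"
  by (auto simp: kl_class_def kl_rel_def)

lemma cls_mem: "y \<in> kl_class X k l z \<Longrightarrow> y \<in> X \<and> kl_rel X k l z y"
  by (simp add: kl_class_def)

lemma cls_mem_eq: "y \<in> kl_class X k l z \<Longrightarrow> kl_class X k l y = kl_class X k l z"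
  using cls_eq cls_mem by metis

lemma XT_ex: "f \<in> Xtilde X \<Longrightarrow> k \<le> l \<Longrightarrow> \<exists>x\<in>X. f (k, l) = kl_class X k l x"
proof -
  assume "f \<in> Xtilde X" "k \<le> l"
  hence "f (k, l) \<in> kl_quot X k l" unfolding Xtilde_def idx_def by auto
  then show ?thesis by (auto simp: kl_quot_def)
qed

lemma XT_ne: "f \<in> Xtilde X \<Longrightarrow> k \<le> l \<Longrightarrow> \<exists>x. x \<in> f (k, l)"
  using XT_ex cls_self by metis

lemma XT_sub: "f \<in> Xtilde X \<Longrightarrow> k \<le> l \<Longrightarrow> f (k, l) \<subseteq> X"
  using XT_ex cls_mem by blast

lemma XT_out: "f \<in> Xtilde X \<Longrightarrow> \<not> k \<le> l \<Longrightarrow> f (k, l) = {}"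
  unfolding Xtilde_def idx_def by auto

lemma XT_compat:
  assumes f: "f \<in> Xtilde X" and "k \<le> l" "k' \<le> l'" "k \<le> k'" "l - k \<le> l' - k'" and z: "z \<in> f (k', l')"
  shows "f (k, l) = kl_class X k l z"
proof -
  have c: "\<forall>(k, l)\<in>idx. \<forall>(k', l')\<in>idx. idx_le (k, l) (k', l') \<longrightarrow>
          (\<forall>z\<in>f (k', l'). f (k, l) = kl_class X k l z)" using f unfolding Xtilde_def by blast
  have "(k, l) \<in> idx" "(k', l') \<in> idx" "idx_le (k, l) (k', l')" using assms by (auto simp: idx_def idx_le_def)
  then show ?thesis using c z by fastforce
qed

lemma XT_in: "f \<in> Xtilde X \<Longrightarrow> k \<le> l \<Longrightarrow> k' \<le> l' \<Longrightarrow> k \<le> k' \<Longrightarrow> l - k \<le> l' - k'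
   \<Longrightarrow> z \<in> f (k', l') \<Longrightarrow> z \<in> f (k, l)"
proof -
  assume a: "f \<in> Xtilde X" "k \<le> l" "k' \<le> l'" "k \<le> k'" "l - k \<le> l' - k'" "z \<in> f (k', l')"
  have "z \<in> X" using XT_sub[OF a(1) a(3)] a(6) by blast
  then show ?thesis using XT_compat[OF a] cls_self by simp
qed

lemma kl_rel_mono:
  assumes surj: "shift ` X = X" and r: "kl_rel X k' l' x z" and kk: "k \<le> k'" and ll: "l + (k' - k) \<le> l'"
  shows "kl_rel X k l x z"
proof -
  have a: "\<forall>i<k'. x i = z i" and P: "Pset X l' (\<lambda>i. x (i + k')) = Pset X l' (\<lambda>i. z (i + k'))"
    using r unfolding kl_rel_alt by blast+
  have a2: "\<forall>i. k \<le> i \<and> i < k' \<longrightarrow> x i = z i" using a by blast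
  have "Pset X l (\<lambda>i. x (i + k)) = Pset X l (\<lambda>i. z (i + k))"
    by (rule G[OF surj P a2 kk ll])
  moreover have "\<forall>i<k. x i = z i" using a kk by simp
  ultimately show ?thesis unfolding kl_rel_alt by blast
qed

lemma iota_in:
  assumes surj: "shift ` X = X" and x: "x \<in> X"
  shows "iota X x \<in> Xtilde X"
proof -
  have h: "\<forall>k l k' l'. k \<le> l \<longrightarrow> k' \<le> l' \<longrightarrow> idx_le (k, l) (k', l') \<longrightarrow>
     (\<forall>z\<in>iota X x (k', l'). iota X x (k, l) = kl_class X k l z)"
  proof (intro allI impI ballI)
    fix k l k' l' z assume kl: "k \<le> l" "k' \<le> l'" and le: "idx_le (k, l) (k', l')" and z: "z \<in> iota X x (k', l')"
    have "kl_rel X k' l' x z" using z kl by (simp add: iota_def kl_class_def)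
    hence "kl_rel X k l x z" by (rule kl_rel_mono[OF surj]) (use le kl in \<open>auto simp: idx_le_def\<close>)
    then show "iota X x (k, l) = kl_class X k l z" using kl cls_eq by (simp add: iota_def)
  qed
  have c1: "\<forall>p. p \<notin> idx \<longrightarrow> iota X x p = {}" by (auto simp: idx_def iota_def)
  have c2: "\<forall>(k,l)\<in>idx. iota X x (k,l) \<in> kl_quot X k l" using x by (auto simp: idx_def iota_def kl_quot_def)
  have c3: "\<forall>(k, l)\<in>idx. \<forall>(k', l')\<in>idx. idx_le (k, l) (k', l') \<longrightarrow>
          (\<forall>z\<in>iota X x (k', l'). iota X x (k, l) = kl_class X k l z)"
    unfolding idx_def using h by blast
  show ?thesis unfolding Xtilde_def using c1 c2 c3 by blast
qed

lemma shift_iota: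
  assumes surj: "shift ` X = X" and a: "a \<in> X"
  shows "shift_tilde X (iota X a) = iota X (shift a)"
proof (rule ext, clarify)
  fix k l
  show "shift_tilde X (iota X a) (k, l) = iota X (shift a) (k, l)"
  proof (cases "k \<le> l")
    case False then show ?thesis by (simp add: shift_tilde_def iota_def)
  next
    case True
    define z where "z = (SOME z. z \<in> kl_class X (Suc k) (Suc l) a)"
    have "z \<in> kl_class X (Suc k) (Suc l) a" unfolding z_def by (rule someI[of _ a], rule cls_self[OF a])
    hence r: "kl_rel X (Suc k) (Suc l) a z" by (simp add: kl_class_def)
    have a1: "\<forall>i<Suc k. a i = z i" and P: "Pset X (Suc l) (\<lambda>i. a (i + Suc k)) = Pset X (Suc l) (\<lambda>i. z (i + Suc k))"
      using r by (auto simp: kl_rel_alt)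
    have "Pset X l (\<lambda>i. a (i + Suc k)) = Pset X l (\<lambda>i. z (i + Suc k))"
      by (rule G[OF surj P]) auto
    hence "kl_rel X k l (shift a) (shift z)" using a1 by (auto simp: kl_rel_alt shift_def)
    hence e: "kl_class X k l (shift a) = kl_class X k l (shift z)" by (rule cls_eq)
    have "shift_tilde X (iota X a) (k, l) = kl_class X k l (shift z)"
      using True by (simp add: shift_tilde_def iota_def z_def)
    also have "\<dots> = iota X (shift a) (k, l)" using True e by (simp add: iota_def)
    finally show ?thesis .
  qed
qed

lemma iota_inj: "inj_on (iota X) X"
proof (rule inj_onI)
  fix a b assume a: "a \<in> X" and b: "b \<in> X" and e: "iota X a = iota X b"
  show "a = b"
  proof (rule ext)
    fix i
    have "iota X a (Suc i, Suc i) = iota X b (Suc i, Suc i)" using e by simp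
    hence "kl_class X (Suc i) (Suc i) a = kl_class X (Suc i) (Suc i) b" by (simp add: iota_def)
    hence "b \<in> kl_class X (Suc i) (Suc i) a" using cls_self[OF b] by simp
    then show "a i = b i" by (simp add: kl_class_def kl_rel_def)
  qed
qed

lemma fin_sep:
  fixes S :: "(nat \<Rightarrow> 'a) set"
  assumes "finite S" shows "\<exists>K. \<forall>u\<in>S. \<forall>v\<in>S. (\<forall>i<K. u i = v i) \<longrightarrow> u = v"
proof -
  define d where "d = (\<lambda>p::(nat \<Rightarrow> 'a) \<times> (nat \<Rightarrow> 'a). SOME i. fst p i \<noteq> snd p i)"
  define D where "D = d ` (S \<times> S)"
  have fD: "finite D" unfolding D_def using assms by simp
  have "\<forall>u\<in>S. \<forall>v\<in>S. (\<forall>i<Suc (Max D). u i = v i) \<longrightarrow> u = v"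
  proof (intro ballI impI)
    fix u v assume u: "u \<in> S" and v: "v \<in> S" and ag: "\<forall>i<Suc (Max D). u i = v i"
    show "u = v"
    proof (rule ccontr)
      assume ne: "u \<noteq> v"
      then have "\<exists>i. u i \<noteq> v i" by (auto simp: fun_eq_iff)
      hence dd: "u (d (u, v)) \<noteq> v (d (u, v))" unfolding d_def by (simp, rule someI_ex)
      have "d (u, v) \<in> D" unfolding D_def using u v by blast
      hence "d (u, v) \<le> Max D" using fD by simp
      then show False using ag dd by (meson le_imp_less_Suc)
    qed
  qed
  then show ?thesis by blast
qed


lemma first_letter_eq:
  assumes inv: "shift ` X \<subseteq> X" and g: "g \<in> Xtilde X" and h: "h \<in> Xtilde X"
    and e: "shift_tilde X g = shift_tilde X h"
    and c: "\<forall>p\<in>g (1, 1). \<forall>q\<in>h (1, 1). p 0 = q 0"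
  shows "g = h"
proof -
  have A: "g (Suc j, l) = h (Suc j, l)" if jl: "Suc j \<le> l" for j l
  proof -
    define z where "z = (SOME z. z \<in> g (Suc j, Suc l))"
    define w where "w = (SOME z. z \<in> h (Suc j, Suc l))"
    have "\<exists>x. x \<in> g (Suc j, Suc l)" by (rule XT_ne[OF g]) (use jl in simp)
    hence z: "z \<in> g (Suc j, Suc l)" unfolding z_def by (rule someI_ex)
    have "\<exists>x. x \<in> h (Suc j, Suc l)" by (rule XT_ne[OF h]) (use jl in simp)
    hence w: "w \<in> h (Suc j, Suc l)" unfolding w_def by (rule someI_ex)
    have wX: "w \<in> X" using XT_sub[OF h, of "Suc j" "Suc l"] w jl by auto
    have "shift_tilde X g (j, l) = kl_class X j l (shift z)" using jl by (simp add: shift_tilde_def z_def)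
    moreover have "shift_tilde X h (j, l) = kl_class X j l (shift w)" using jl by (simp add: shift_tilde_def w_def)
    ultimately have cc: "kl_class X j l (shift z) = kl_class X j l (shift w)" using e by simp
    have "shift w \<in> X" using inv wX by blast
    hence "shift w \<in> kl_class X j l (shift z)" using cls_self[of "shift w" X j l] cc by simp
    hence r: "kl_rel X j l (shift z) (shift w)" by (simp add: kl_class_def)
    have z1: "z \<in> g (1, 1)" by (rule XT_in[OF g _ _ _ _ z]) (use jl in auto)
    have w1: "w \<in> h (1, 1)" by (rule XT_in[OF h _ _ _ _ w]) (use jl in auto)
    have z0: "z 0 = w 0" using c z1 w1 by blast
    have ag: "\<forall>i<Suc j. z i = w i"
    proof (intro allI impI)
      fix i assume i: "i < Suc j"
      show "z i = w i"
      proof (cases i)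
        case 0 with z0 show ?thesis by simp
      next
        case (Suc i')
        hence "i' < j" using i by simp
        hence "shift z i' = shift w i'" using r unfolding kl_rel_alt by blast
        thus ?thesis using Suc by (simp add: shift_def)
      qed
    qed
    have Pe: "Pset X l (\<lambda>i. shift z (i + j)) = Pset X l (\<lambda>i. shift w (i + j))"
      using r unfolding kl_rel_alt by blast
    have "(\<lambda>i. shift z (i + j)) = (\<lambda>i. z (i + Suc j))" "(\<lambda>i. shift w (i + j)) = (\<lambda>i. w (i + Suc j))"
      by (simp_all add: shift_def)
    hence "Pset X l (\<lambda>i. z (i + Suc j)) = Pset X l (\<lambda>i. w (i + Suc j))" using Pe by simp
    hence "kl_rel X (Suc j) l z w" using ag unfolding kl_rel_alt by blast
    hence "kl_class X (Suc j) l z = kl_class X (Suc j) l w" by (rule cls_eq)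
    moreover have "g (Suc j, l) = kl_class X (Suc j) l z" by (rule XT_compat[OF g _ _ _ _ z]) (use jl in auto)
    moreover have "h (Suc j, l) = kl_class X (Suc j) l w" by (rule XT_compat[OF h _ _ _ _ w]) (use jl in auto)
    ultimately show ?thesis by simp
  qed
  show ?thesis
  proof (rule ext, clarify)
    fix k l
    show "g (k, l) = h (k, l)"
    proof (cases "k \<le> l")
      case False then show ?thesis using XT_out[OF g] XT_out[OF h] by simp
    next
      case True
      show ?thesis
      proof (cases k)
        case (Suc j) then show ?thesis using A True by simp
      next
        case 0
        obtain z where z: "z \<in> g (1, Suc l)" using XT_ne[OF g, of 1 "Suc l"] by auto
        have gh: "g (1, Suc l) = h (1, Suc l)" using A[of 0 "Suc l"] by simp
        have "g (0, l) = kl_class X 0 l z" by (rule XT_compat[OF g _ _ _ _ z]) auto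
        moreover have "h (0, l) = kl_class X 0 l z" by (rule XT_compat[OF h _ _ _ _ z[unfolded gh]]) auto
        ultimately show ?thesis using 0 by simp
      qed
    qed
  qed
qed

lemma L1:
  assumes surj: "shift ` X = X" and g: "g \<in> Xtilde X" and kl: "k < l"
    and y: "y \<in> shift_tilde X g (k, l)" and p: "p \<in> g (1, 1)"
  shows "conc [p 0] y \<in> X"
proof -
  define z where "z = (SOME z. z \<in> g (Suc k, Suc l))"
  have "\<exists>x. x \<in> g (Suc k, Suc l)" by (rule XT_ne[OF g]) (use kl in simp)
  hence z: "z \<in> g (Suc k, Suc l)" unfolding z_def by (rule someI_ex)
  have zX: "z \<in> X" using XT_sub[OF g, of "Suc k" "Suc l"] z kl by auto
  have "g (1, 1) = kl_class X 1 1 z" by (rule XT_compat[OF g _ _ _ _ z]) (use kl in auto)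
  hence "kl_rel X 1 1 z p" using p by (simp add: kl_class_def)
  hence zp: "z 0 = p 0" by (simp add: kl_rel_def)
  have "y \<in> kl_class X k l (shift z)" using y kl by (simp add: shift_tilde_def z_def)
  hence r: "kl_rel X k l (shift z) y" by (simp add: kl_class_def)
  have ag: "\<forall>i<k. shift z i = y i" and P: "Pset X l (\<lambda>i. shift z (i + k)) = Pset X l (\<lambda>i. y (i + k))"
    using r unfolding kl_rel_alt by blast+
  define m where "m = l - k - 1"
  have lm: "l = Suc k + m" using kl by (simp add: m_def)
  obtain u where u: "u \<in> X" "(\<lambda>i. u (i + m)) = z" using shift_surj_iter[OF surj zX] by blast
  have uz: "\<And>i. u (i + m) = z i" using u(2) by (simp add: fun_eq_iff)
  define \<mu> where "\<mu> = map u [0..<l]"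
  have uc: "u = conc \<mu> (\<lambda>i. u (i + l))" unfolding \<mu>_def conc_map0 ..
  have ul: "(\<lambda>i. u (i + l)) = (\<lambda>i. shift z (i + k))"
  proof (rule ext)
    fix i
    have "u (i + l) = u (Suc (i + k) + m)" using lm by (simp add: algebra_simps)
    also have "\<dots> = z (Suc (i + k))" by (rule uz)
    finally show "u (i + l) = shift z (i + k)" by (simp add: shift_def)
  qed
  have "\<mu> \<in> Pset X l (\<lambda>i. shift z (i + k))"
    unfolding Pset_def using lang_map[OF u(1), of l] u(1) uc ul by (simp add: \<mu>_def)
  hence "\<mu> \<in> Pset X l (\<lambda>i. y (i + k))" using P by simp
  hence cy: "conc \<mu> (\<lambda>i. y (i + k)) \<in> X" unfolding Pset_def by blast
  have sh: "(\<lambda>i. conc \<mu> (\<lambda>i. y (i + k)) (i + m)) \<in> X"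
    by (rule shift_inv_iter[OF _ cy]) (use surj in simp)
  have lmu: "length \<mu> = l" by (simp add: \<mu>_def)
  have eq: "(\<lambda>i. conc \<mu> (\<lambda>i. y (i + k)) (i + m)) = conc [p 0] y"
  proof (rule ext)
    fix n
    show "conc \<mu> (\<lambda>i. y (i + k)) (n + m) = conc [p 0] y n"
    proof (cases n)
      case 0
      have "m < l" using lm by simp
      hence "conc \<mu> (\<lambda>i. y (i + k)) m = u m" by (simp add: conc_def \<mu>_def)
      also have "u m = z 0" using uz[of 0] by simp
      finally show ?thesis using 0 zp by (simp add: conc_def)
    next
      case (Suc n')
      show ?thesis
      proof (cases "n' < k")
        case True
        hence "n + m < l" using Suc lm by simp
        hence "conc \<mu> (\<lambda>i. y (i + k)) (n + m) = u (n + m)" by (simp add: conc_def \<mu>_def)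
        also have "\<dots> = z n" by (rule uz)
        also have "\<dots> = shift z n'" using Suc by (simp add: shift_def)
        also have "\<dots> = y n'" using ag True by blast
        finally show ?thesis using Suc by (simp add: conc_def)
      next
        case False
        hence "\<not> n + m < l" using Suc lm by simp
        hence "conc \<mu> (\<lambda>i. y (i + k)) (n + m) = y (n + m - l + k)" using lmu by (simp add: conc_def)
        also have "n + m - l + k = n'" using Suc lm False by simp
        finally show ?thesis using Suc by (simp add: conc_def)
      qed
    qed
  qed
  show ?thesis using sh unfolding eq .
qed

theorem corollary3p3:
  fixes X :: "(nat \<Rightarrow> 'a::finite) set"
  assumes "is_subshift X"
    and "shift ` X = X"
    and "finite (Sp_l X shift)"
  shows "Sp_l (Xtilde X) (shift_tilde X) = iota X ` Sp_l X shift
    \<and> card (Sp_l (Xtilde X) (shift_tilde X)) = card (Sp_l X shift)"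
proof -
  note surj = assms(2)
  have inv: "shift ` X \<subseteq> X" using surj by simp
  define S where "S = Sp_l X shift"
  have SX: "S \<subseteq> X" unfolding S_def Sp_l_def by blast
  have injS: "inj_on (iota X) S" using inj_on_subset[OF iota_inj SX] .
  have sup: "iota X ` S \<subseteq> Sp_l (Xtilde X) (shift_tilde X)"
  proof
    fix t assume "t \<in> iota X ` S"
    then obtain x where x: "x \<in> S" "t = iota X x" by blast
    then obtain a b where ab: "a \<in> X" "b \<in> X" "a \<noteq> b" "shift a = x" "shift b = x"
      unfolding S_def Sp_l_def by blast
    have xX: "x \<in> X" using x SX by blast
    have "iota X a \<noteq> iota X b" using iota_inj ab unfolding inj_on_def by blast
    moreover have "shift_tilde X (iota X a) = t" "shift_tilde X (iota X b) = t"
      using shift_iota[OF surj ab(1)] shift_iota[OF surj ab(2)] ab x by simp_all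
    moreover have "iota X a \<in> Xtilde X" "iota X b \<in> Xtilde X" "t \<in> Xtilde X"
      using iota_in[OF surj] ab(1,2) xX x(2) by auto
    ultimately show "t \<in> Sp_l (Xtilde X) (shift_tilde X)"
      unfolding Sp_l_def by (intro CollectI conjI bexI[of _ "iota X a"] bexI[of _ "iota X b"])
  qed
  have sub: "Sp_l (Xtilde X) (shift_tilde X) \<subseteq> iota X ` S"
  proof
    fix f assume "f \<in> Sp_l (Xtilde X) (shift_tilde X)"
    then obtain g h where f: "f \<in> Xtilde X" and g: "g \<in> Xtilde X" and h: "h \<in> Xtilde X"
      and gh: "g \<noteq> h" and eg: "shift_tilde X g = f" and eh: "shift_tilde X h = f"
      unfolding Sp_l_def by blast
    have "\<not> (\<forall>p\<in>g (1, 1). \<forall>q\<in>h (1, 1). p 0 = q 0)"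
    proof
      assume "\<forall>p\<in>g (1, 1). \<forall>q\<in>h (1, 1). p 0 = q 0"
      hence "g = h" using first_letter_eq[OF inv g h] eg eh by simp
      thus False using gh by simp
    qed
    then obtain p q where p: "p \<in> g (1, 1)" and q: "q \<in> h (1, 1)" and pq: "p 0 \<noteq> q 0"
      by blast
    have subS: "f (k, l) \<subseteq> S" if kl: "k < l" for k l
    proof
      fix y assume y: "y \<in> f (k, l)"
      have yX: "y \<in> X" using XT_sub[OF f, of k l] kl y by auto
      have 1: "conc [p 0] y \<in> X" using L1[OF surj g kl _ p] y eg by blast
      have 2: "conc [q 0] y \<in> X" using L1[OF surj h kl _ q] y eh by blast
      have "conc [p 0] y \<noteq> conc [q 0] y" using pq by (auto simp: conc_def fun_eq_iff)
      moreover have s: "shift (conc [c] y) = y" for c by (simp add: shift_def conc_def)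
      ultimately show "y \<in> S" unfolding S_def Sp_l_def
        by (intro CollectI conjI yX bexI[OF _ 1] bexI[OF _ 2] s)
    qed
    obtain K where K: "\<forall>u\<in>S. \<forall>v\<in>S. (\<forall>i<K. u i = v i) \<longrightarrow> u = v"
      using fin_sep[of S] assms(3) unfolding S_def by blast
    obtain x where x: "x \<in> f (K, Suc K)" using XT_ne[OF f, of K "Suc K"] by auto
    have xS: "x \<in> S" using subS[of K "Suc K"] x by auto
    have "f = iota X x"
    proof (rule ext, clarify)
      fix k l
      show "f (k, l) = iota X x (k, l)"
      proof (cases "k \<le> l")
        case False then show ?thesis using XT_out[OF f] by (simp add: iota_def)
      next
        case True
        define K' where "K' = max k K"
        define L' where "L' = K' + (l - k) + 1"
        obtain y where y: "y \<in> f (K', L')" using XT_ne[OF f, of K' L'] by (auto simp: L'_def)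
        have yS: "y \<in> S" using subS[of K' L'] y by (auto simp: L'_def)
        have "f (K, Suc K) = kl_class X K (Suc K) y"
          by (rule XT_compat[OF f _ _ _ _ y]) (auto simp: K'_def L'_def)
        hence "kl_rel X K (Suc K) y x" using x by (simp add: kl_class_def)
        hence "\<forall>i<K. y i = x i" by (simp add: kl_rel_def)
        hence yx: "y = x" using K yS xS by simp
        have "f (k, l) = kl_class X k l y"
          by (rule XT_compat[OF f _ _ _ _ y]) (use True in \<open>auto simp: K'_def L'_def\<close>)
        then show ?thesis using True yx by (simp add: iota_def)
      qed
    qed
    then show "f \<in> iota X ` S" using xS by blast
  qed
  have eqS: "Sp_l (Xtilde X) (shift_tilde X) = iota X ` S" using sup sub by blast
  show ?thesis using eqS card_image[OF injS] unfolding S_def by simp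
qed

end
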